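(* Let $r>0$ and $m\ge0$ an integer. There are constants $C$ depending only on $r$ and $m$ such that: (a) For every $C^\infty$ function $f\colon[0,1]\to\mathbb{R}^d$, $\lVert f\rVert^2_{r-1,m}\le C(\lVert f\rVert^2_{r,m}+\lVert f\rVert^2_{r+1,m+1})$ and $\lvert f\rvert^2_{\infty;r,m}\le C(\lVert f\rVert^2_{r,m}+\lVert f\rVert^2_{r+1,m+1})$; and if moreover $f^{(m)}(1)=0$, then $\lVert f\rVert^2_{r-1,m}\le C\lVert f\rVert^2_{r+1,m+1}$ and $\lvert f\rvert^2_{\infty;r,m}\le C\lVert f\rVert^2_{r+1,m+1}$. (b) The same four inequalities hold, with the same constants for all $n\in\mathbb{N}$, for every sequence $f_1,\dots,f_n\in\mathbb{R}^d$, with the norms interpreted as discrete seminorms, where in the last two inequalities the hypothesis $f^{(m)}(1)=0$ is replaced by $(\nabla_+^mf)_{n-m}=0$.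
   Context: Continuous weighted seminorms: $\lVert f\rVert^2_{r,m}=\int_0^1s^r\lvert f^{(m)}(s)\rvert^2ds$ and $\lvert f\rvert^2_{\infty;r,m}=\sup_{0\le s\le1}s^r\lvert f^{(m)}(s)\rvert^2$. Discrete: for $n\in\mathbb{N}$, real $r>-1$ and $k\ge1$, $s_k^{(r)}=\frac{\Gamma(k+r)}{n^r\Gamma(k)}$; $(\nabla_+f)_k=n(f_{k+1}-f_k)$; $\lVert f\rVert^2_{r,m}=\frac1n\sum_{k=1}^{n-m}s_k^{(r)}\lvert(\nabla_+^mf)_k\rvert^2$ and $\lvert f\rvert^2_{\infty;r,m}=\max_{1\le k\le n-m}s_k^{(r)}\lvert(\nabla_+^mf)_k\rvert^2$. *)

theory Defs
  imports "HOL-Analysis.Analysis"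
begin

text \<open>A function \<open>f : [0,1] \<rightarrow> \<real>^d\<close> is represented by its components
  \<open>f i :: real \<Rightarrow> real\<close> for \<open>i < d\<close>; a sequence \<open>f_1,...,f_n \<in> \<real>^d\<close>
  by components \<open>f i :: nat \<Rightarrow> real\<close> (index \<open>k\<close>), \<open>i < d\<close>.
  This makes the dimension d an explicit variable, so that the constant C can be
  chosen independently of d.\<close>

fun vderiv :: "nat \<Rightarrow> (real \<Rightarrow> 'a::real_normed_vector) \<Rightarrow> real \<Rightarrow> 'a" where
  "vderiv 0 g = g"
| "vderiv (Suc k) g = (\<lambda>x. vector_derivative (vderiv k g) (at x within {0..1}))"

definition smooth01 :: "(real \<Rightarrow> 'a::real_normed_vector) \<Rightarrow> bool" where
  "smooth01 g \<longleftrightarrow> (\<forall>k. \<forall>x\<in>{0..1}. vderiv k g differentiable (at x within {0..1}))"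

definition dnormsq :: "nat \<Rightarrow> nat \<Rightarrow> (nat \<Rightarrow> real \<Rightarrow> real) \<Rightarrow> real \<Rightarrow> real" where
  "dnormsq d m f s = (\<Sum>i<d. (vderiv m (f i) s)\<^sup>2)"

definition cnorm2 :: "nat \<Rightarrow> real \<Rightarrow> nat \<Rightarrow> (nat \<Rightarrow> real \<Rightarrow> real) \<Rightarrow> real" where
  "cnorm2 d r m f = (LINT s:{0..1}|lborel. s powr r * dnormsq d m f s)"

definition csup2 :: "nat \<Rightarrow> real \<Rightarrow> nat \<Rightarrow> (nat \<Rightarrow> real \<Rightarrow> real) \<Rightarrow> real" where
  "csup2 d r m f = (SUP s\<in>{0..1}. s powr r * dnormsq d m f s)"

definition sk :: "nat \<Rightarrow> real \<Rightarrow> nat \<Rightarrow> real" where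
  "sk n r k = Gamma (real k + r) / (real n powr r * Gamma (real k))"

definition nabla :: "nat \<Rightarrow> (nat \<Rightarrow> real) \<Rightarrow> nat \<Rightarrow> real" where
  "nabla n g = (\<lambda>k. real n * (g (k + 1) - g k))"

definition ddiffsq :: "nat \<Rightarrow> nat \<Rightarrow> nat \<Rightarrow> (nat \<Rightarrow> nat \<Rightarrow> real) \<Rightarrow> nat \<Rightarrow> real" where
  "ddiffsq n d m f k = (\<Sum>i<d. (((nabla n ^^ m) (f i)) k)\<^sup>2)"

definition dnorm2 :: "nat \<Rightarrow> nat \<Rightarrow> real \<Rightarrow> nat \<Rightarrow> (nat \<Rightarrow> nat \<Rightarrow> real) \<Rightarrow> real" where
  "dnorm2 n d r m f = (1 / real n) * (\<Sum>k=1..n-m. sk n r k * ddiffsq n d m f k)"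

text \<open>Maximum over \<open>1 \<le> k \<le> n-m\<close>; the \<open>insert 0\<close> only matters when this range is
  empty (all terms are nonnegative), in which case the value is 0.\<close>
definition dsup2 :: "nat \<Rightarrow> nat \<Rightarrow> real \<Rightarrow> nat \<Rightarrow> (nat \<Rightarrow> nat \<Rightarrow> real) \<Rightarrow> real" where
  "dsup2 n d r m f = Max (insert 0 ((\<lambda>k. sk n r k * ddiffsq n d m f k) ` {1..n-m}))"

end

theory Submission
  imports Defs
begin


lemma sk_pos: "n > 0 \<Longrightarrow> real k + p > 0 \<Longrightarrow> k \<ge> 1 \<Longrightarrow> sk n p k > 0"
  unfolding sk_def by (auto intro!: divide_pos_pos mult_pos_pos)

lemma sk_Suc: assumes "k \<ge> 1" "real k + p > 0"
  shows "sk n p (k+1) = sk n p k * (real k + p) / real k"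
proof -
  have g1: "Gamma (real (k+1) + p) = (real k + p) * Gamma (real k + p)"
    using Gamma_plus1[of "real k + p"] assms by (auto simp: add_ac nonpos_Ints_def)
  have g2: "Gamma (real (k+1)) = real k * Gamma (real k)"
    using Gamma_plus1[of "real k"] assms by (auto simp: add_ac nonpos_Ints_def)
  have "Gamma (real k) > 0" using assms by auto
  then show ?thesis unfolding sk_def g1 g2 using assms by (simp add: field_simps)
qed

lemma sk_plus1: assumes "n > 0" "real k + p > 0"
  shows "sk n (p+1) k = sk n p k * (real k + p) / real n"
proof -
  have g1: "Gamma (real k + (p+1)) = (real k + p) * Gamma (real k + p)"
    using Gamma_plus1[of "real k + p"] assms by (auto simp: add_ac nonpos_Ints_def)
  have "real n powr (p+1) = real n powr p * real n" using assms by (simp add: powr_add)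
  then show ?thesis unfolding sk_def g1 using assms by (simp add: field_simps)
qed


lemma stepK:
  fixes n k :: nat and r e :: real and G D P :: "nat \<Rightarrow> real"
  assumes n: "n > 0" and r: "r > 0" and e: "e > 0" and k: "k \<ge> 1"
    and G1: "G (k+1) \<ge> 0" and D: "D k \<ge> 0"
    and st: "G (k+1) - G k = 2 * P k - D k"
    and am: "\<And>e. e > 0 \<Longrightarrow> 2 * \<bar>P k\<bar> \<le> e * G (k+1) + D k / e"
  shows "sk n r (k+1) * G (k+1) - sk n r k * G k \<ge>
     (r - e) * (sk n (r-1) (k+1) * G (k+1) / n) - (1 + 1/e) * (n * sk n (r+1) k * D k)"
proof -
  define w where "w = sk n r k"
  have kpos: "real k > 0" using k by auto
  have wpos: "w > 0" unfolding w_def using sk_pos[of n k r] n r k by auto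
  have h1: "sk n r (k+1) = w * (real k + r) / real k" unfolding w_def
    using sk_Suc[of k r n] k r by auto
  have "sk n ((r-1)+1) (k+1) = sk n (r-1) (k+1) * (real (k+1) + (r-1)) / real n"
    using sk_plus1[of n "k+1" "r-1"] n r by auto
  hence "sk n r (k+1) = sk n (r-1) (k+1) * (real k + r) / real n" by simp
  hence "sk n (r-1) (k+1) * (real k + r) / real n = w * (real k + r) / real k" using h1 by simp
  hence "(sk n (r-1) (k+1) * real k) * (real k + r) = (w * real n) * (real k + r)" using n kpos
    by (simp add: field_simps)
  hence "sk n (r-1) (k+1) * real k = w * real n" using kpos r by simp
  hence h2: "sk n (r-1) (k+1) = w * real n / real k" using kpos by (simp add: field_simps)
  have h3: "sk n (r+1) k = w * (real k + r) / real n" unfolding w_def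
    using sk_plus1[of n k r] n r by auto
  have a: "2 * \<bar>P k\<bar> \<le> (e / k) * G (k+1) + D k / (e / k)" using am[of "e/k"] e kpos by auto
  have a2: "D k / (e / k) = real k * D k / e" using e kpos by (simp add: field_simps)
  have stuff: "0 \<le> G (k+1) * (e / k) + 2 * P k - D k + (1 + 1/e) * ((real k + r) * D k)"
  proof -
    have "(real k + r) * D k / e \<ge> real k * D k / e" using D e r by (intro divide_right_mono mult_right_mono) auto
    moreover have "(real k + r) * D k \<ge> D k" using D k r
    proof -
      have "1 \<le> real k + r" using k r by linarith
      from mult_right_mono[OF this D] show ?thesis by simp
    qed
    moreover have "G (k+1) * (e / k) + 2 * P k - D k + (1 + 1/e) * ((real k + r) * D k)
      = (e/k) * G (k+1) + 2 * P k - D k + (real k + r) * D k + (real k + r) * D k / e"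
      by (simp add: algebra_simps add_divide_distrib)
    moreover have "(e/k) * G (k+1) \<ge> 0" using G1 e kpos by simp
    ultimately show ?thesis using a a2 G1 by linarith
  qed
  have "sk n r (k+1) * G (k+1) - sk n r k * G k -
     ((r - e) * (sk n (r-1) (k+1) * G (k+1) / n) - (1 + 1/e) * (n * sk n (r+1) k * D k))
     = w * (G (k+1) * (e / k) + 2 * P k - D k + (1 + 1/e) * ((real k + r) * D k))"
  proof -
    have Gk: "G k = G (k+1) - 2 * P k + D k" using st by simp
    show ?thesis unfolding h1 h2 h3 Gk w_def[symmetric] using n kpos e
      by (simp add: field_simps)
  qed
  moreover have "w * (G (k+1) * (e / k) + 2 * P k - D k + (1 + 1/e) * ((real k + r) * D k)) \<ge> 0"
    using wpos stuff by simp
  ultimately show ?thesis by linarith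
qed



lemma stepK3:
  fixes n k :: nat and r :: real and G D P :: "nat \<Rightarrow> real"
  assumes n: "n > 0" and r: "r > 0" and k: "k \<ge> 1" and kn: "k \<le> n"
    and G1: "G (k+1) \<ge> 0" and D: "D k \<ge> 0"
    and st: "G (k+1) - G k = 2 * P k - D k"
    and am: "\<And>e. e > 0 \<Longrightarrow> 2 * \<bar>P k\<bar> \<le> e * G (k+1) + D k / e"
  shows "sk n (r+1) (k+1) * G (k+1) - sk n (r+1) k * G k \<le>
     (r + 2) * (sk n r (k+1) * G (k+1) / n) + n * sk n (r+1) k * D k"
proof -
  define v where "v = sk n (r+1) k"
  have kpos: "real k > 0" using k by auto
  have vpos: "v > 0" unfolding v_def using sk_pos[of n k "r+1"] n r k by auto
  have h1: "sk n (r+1) (k+1) = v * (real k + r + 1) / real k" unfolding v_def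
    using sk_Suc[of k "r+1" n] k r by (auto simp: add_ac)
  have "sk n (r+1) (k+1) = sk n r (k+1) * (real (k+1) + r) / real n"
    using sk_plus1[of n "k+1" "r"] n r by auto
  hence "sk n r (k+1) * (real k + r + 1) / real n = v * (real k + r + 1) / real k" using h1 by (simp add: add_ac)
  hence "(sk n r (k+1) * real k) * (real k + r + 1) = (v * real n) * (real k + r + 1)" using n kpos
    by (simp add: field_simps)
  hence "sk n r (k+1) * real k = v * real n" using kpos r
    by (metis add_pos_pos mult_cancel_right order_less_irrefl zero_less_one)
  hence h2: "sk n r (k+1) = v * real n / real k" using kpos by (simp add: field_simps)
  have a: "2 * \<bar>P k\<bar> \<le> (1 / k) * G (k+1) + D k / (1 / k)" using am[of "1/k"] kpos by auto
  have kD: "real k * D k \<le> real n * D k" using kn D by (intro mult_right_mono) auto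
  have stuff: "0 \<le> G (k+1) / k + real n * D k + D k - 2 * P k"
    using a kD D by (simp add: field_simps)
  have "(r + 2) * (sk n r (k+1) * G (k+1) / n) + n * sk n (r+1) k * D k
      - (sk n (r+1) (k+1) * G (k+1) - sk n (r+1) k * G k)
     = v * (G (k+1) / k + real n * D k + D k - 2 * P k)"
  proof -
    have Gk: "G k = G (k+1) - 2 * P k + D k" using st by simp
    show ?thesis unfolding h1 h2 Gk v_def[symmetric] using n kpos
      by (simp add: field_simps)
  qed
  moreover have "v * (G (k+1) / k + real n * D k + D k - 2 * P k) \<ge> 0"
    using vpos stuff by simp
  ultimately show ?thesis by linarith
qed



lemma sum_shift1: "N \<ge> 1 \<Longrightarrow> (\<Sum>k=1..N. f k) = f 1 + (\<Sum>k=1..<N. f (Suc k)) " for f :: "nat \<Rightarrow> real"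
proof (induction N)
  case 0 then show ?case by simp
next
  case (Suc N)
  show ?case
  proof (cases "N = 0")
    case True then show ?thesis by simp
  next
    case False
    then have "(\<Sum>k=1..Suc N. f k) = f 1 + (\<Sum>k=1..<N. f (Suc k)) + f (Suc N)" using Suc by simp
    also have "\<dots> = f 1 + (\<Sum>k=1..<Suc N. f (Suc k))" using False by simp
    finally show ?thesis .
  qed
qed

lemma disc_core:
  fixes n N m :: nat and r :: real and G D P :: "nat \<Rightarrow> real"
  assumes r: "r > 0" and N: "N \<ge> 1" and nN: "n = N + m"
    and Gnn: "\<And>k. G k \<ge> 0" and Dnn: "\<And>k. D k \<ge> 0"
    and st: "\<And>k. G (k+1) - G k = 2 * P k - D k"
    and am: "\<And>k e. e > 0 \<Longrightarrow> 2 * \<bar>P k\<bar> \<le> e * G (k+1) + D k / e"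
  defines "B \<equiv> (\<Sum>k=1..<N. n * sk n (r+1) k * D k)"
  shows "(1/n) * (\<Sum>k=1..N. sk n (r-1) k * G k) \<le> (2/r) * (sk n r N * G N) + (2/r) * (1 + 2/r) * B"
    and "\<And>j. j \<in> {1..N} \<Longrightarrow> sk n r j * G j \<le> sk n r N * G N + (1 + 1/r) * B"
    and "sk n r N * G N \<le> (m+1) * ((r+2) * ((1/n) * (\<Sum>k=1..N. sk n r k * G k)) + B)"
proof -
  have n: "n > 0" using N nN by auto
  define c where "c k = sk n r k * G k" for k
  define a where "a k = sk n (r-1) k * G k / n" for k
  define b where "b k = n * sk n (r+1) k * D k" for k
  define e where "e k = sk n (r+1) k * G k" for k
  define \<alpha> where "\<alpha> k = sk n r k * G k / n" for k
  have skp: "\<And>p k. p > -1 \<Longrightarrow> k \<ge> 1 \<Longrightarrow> sk n p k > 0"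
  proof -
    fix p :: real and k :: nat assume "p > -1" "k \<ge> 1"
    moreover have "real k \<ge> 1" using \<open>k \<ge> 1\<close> by simp
    ultimately show "sk n p k > 0" using sk_pos[of n k p] n by linarith
  qed
  have bnn: "b k \<ge> 0" if "k \<ge> 1" for k using skp[of "r+1" k] that r Dnn[of k] n unfolding b_def by auto
  have cnn: "c k \<ge> 0" if "k \<ge> 1" for k using skp[of "r" k] that r Gnn[of k] unfolding c_def by auto
  have ann: "a k \<ge> 0" if "k \<ge> 1" for k using skp[of "r-1" k] that r Gnn[of k] unfolding a_def by auto
  have \<alpha>nn: "\<alpha> k \<ge> 0" if "k \<ge> 1" for k using skp[of "r" k] that r Gnn[of k] unfolding \<alpha>_def by auto
  have enn: "e k \<ge> 0" if "k \<ge> 1" for k using skp[of "r+1" k] that r Gnn[of k] unfolding e_def by auto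
  have B: "B = (\<Sum>k=1..<N. b k)" unfolding B_def b_def ..
  have Bsub: "(\<Sum>k=j..<N. b k) \<le> B" if "j \<ge> 1" for j
    unfolding B using that bnn by (intro sum_mono2) auto
  have S: "c j \<le> c N + (1 + 1/r) * B" if j: "j \<in> {1..N}" for j
  proof -
    have "\<forall>k\<in>{j..<N}. c (Suc k) - c k \<ge> - ((1 + 1/r) * b k)"
    proof
      fix k assume "k \<in> {j..<N}"
      hence k: "k \<ge> 1" using j by auto
      from stepK[of n r r k G D P, OF n r r k Gnn Dnn st am]
      show "c (Suc k) - c k \<ge> - ((1 + 1/r) * b k)" unfolding c_def b_def by simp
    qed
    hence "(\<Sum>k=j..<N. - ((1 + 1/r) * b k)) \<le> (\<Sum>k=j..<N. c (Suc k) - c k)" by (intro sum_mono) auto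
    also have "\<dots> = c N - c j" using j by (intro sum_Suc_diff') auto
    finally have "- ((1 + 1/r) * (\<Sum>k=j..<N. b k)) \<le> c N - c j" by (simp only: sum_negf sum_distrib_left)
    moreover have "(1 + 1/r) * (\<Sum>k=j..<N. b k) \<le> (1 + 1/r) * B"
      using Bsub[of j] j r by (intro mult_left_mono) auto
    ultimately show ?thesis by linarith
  qed
  then show "\<And>j. j \<in> {1..N} \<Longrightarrow> sk n r j * G j \<le> sk n r N * G N + (1 + 1/r) * B"
    unfolding c_def by blast
  have c1: "c 1 = r * a 1"
  proof -
    have "sk n ((r-1)+1) 1 = sk n (r-1) 1 * (real 1 + (r-1)) / real n"
      using sk_plus1[of n 1 "r-1"] n r by auto
    thus ?thesis unfolding c_def a_def by simp
  qed
  have "\<forall>k\<in>{1..<N}. c (Suc k) - c k \<ge> (r/2) * a (Suc k) - (1 + 1/(r/2)) * b k"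
  proof
    fix k assume "k \<in> {1..<N}"
    hence k: "k \<ge> 1" by auto
    from stepK[of n r "r/2" k G D P, OF n r _ k Gnn Dnn st am] r
    show "c (Suc k) - c k \<ge> (r/2) * a (Suc k) - (1 + 1/(r/2)) * b k" unfolding c_def b_def a_def
      by simp
  qed
  hence "(\<Sum>k=1..<N. (r/2) * a (Suc k) - (1 + 1/(r/2)) * b k) \<le> (\<Sum>k=1..<N. c (Suc k) - c k)"
    by (intro sum_mono) auto
  also have "\<dots> = c N - c 1" using N by (intro sum_Suc_diff') auto
  finally have I1: "(r/2) * (\<Sum>k=1..<N. a (Suc k)) - (1 + 2/r) * B \<le> c N - c 1"
    unfolding B by (simp add: sum_subtractf sum_distrib_left)
  have Ieq: "(1/n) * (\<Sum>k=1..N. sk n (r-1) k * G k) = a 1 + (\<Sum>k=1..<N. a (Suc k))"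
    unfolding sum_distrib_left using sum_shift1[OF N, of a] unfolding a_def by simp
  show "(1/n) * (\<Sum>k=1..N. sk n (r-1) k * G k) \<le> (2/r) * (sk n r N * G N) + (2/r) * (1 + 2/r) * B"
  proof -
    have "(\<Sum>k=1..<N. a (Suc k)) \<le> (2/r) * (c N - c 1 + (1 + 2/r) * B)"
      using I1 r by (simp add: field_simps)
    hence "a 1 + (\<Sum>k=1..<N. a (Suc k)) \<le> (2/r) * c N + (2/r) * (1 + 2/r) * B - a 1"
      using c1 r by (simp add: field_simps)
    thus ?thesis unfolding Ieq c_def using ann[of 1] by simp
  qed
  have "\<forall>k\<in>{1..<N}. e (Suc k) - e k \<le> (r+2) * \<alpha> (Suc k) + b k"
  proof
    fix k assume "k \<in> {1..<N}"
    hence k: "k \<ge> 1" "k \<le> n" using nN by auto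
    from stepK3[of n r k G D P, OF n r k Gnn Dnn st am]
    show "e (Suc k) - e k \<le> (r+2) * \<alpha> (Suc k) + b k" unfolding e_def b_def \<alpha>_def
      by simp
  qed
  hence "(\<Sum>k=1..<N. e (Suc k) - e k) \<le> (\<Sum>k=1..<N. (r+2) * \<alpha> (Suc k) + b k)"
    by (intro sum_mono) auto
  hence X1: "e N - e 1 \<le> (r+2) * (\<Sum>k=1..<N. \<alpha> (Suc k)) + B"
    using sum_Suc_diff'[of 1 N e] N unfolding B by (simp add: sum.distrib sum_distrib_left)
  have e1: "e 1 = (r+1) * \<alpha> 1"
    unfolding e_def \<alpha>_def using sk_plus1[of n 1 r] n r by simp
  have Aeq: "(1/n) * (\<Sum>k=1..N. sk n r k * G k) = \<alpha> 1 + (\<Sum>k=1..<N. \<alpha> (Suc k))"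
    unfolding sum_distrib_left using sum_shift1[OF N, of \<alpha>] unfolding \<alpha>_def by simp
  have eN: "e N \<le> (r+2) * ((1/n) * (\<Sum>k=1..N. sk n r k * G k)) + B"
    unfolding Aeq using X1 e1 \<alpha>nn[of 1] by (simp add: algebra_simps)
  have cN: "c N * (real N + r) = e N * n"
    unfolding c_def e_def using sk_plus1[of n N r] n r N by (simp add: field_simps)
  have "c N \<le> (m+1) * e N"
  proof -
    have "real n \<le> (m+1) * (real N + r)"
    proof -
      have "m \<le> m * N" using N by simp
      hence "n \<le> (m+1) * N" using nN by simp
      hence "real n \<le> real ((m+1) * N)" by (simp only: of_nat_le_iff)
      hence "real n \<le> (m+1) * real N" by (simp add: distrib_right)
      also have "\<dots> \<le> (m+1) * (real N + r)" using r by (intro mult_left_mono) auto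
      finally show ?thesis .
    qed
    hence "e N * n \<le> e N * ((m+1) * (real N + r))" using enn[of N] N by (intro mult_left_mono) auto
    hence "c N * (real N + r) \<le> ((m+1) * e N) * (real N + r)" using cN by (simp add: algebra_simps)
    moreover have "real N + r > 0" using r by simp
    ultimately show ?thesis by (simp add: mult_le_cancel_right)
  qed
  also have "\<dots> \<le> (m+1) * ((r+2) * ((1/n) * (\<Sum>k=1..N. sk n r k * G k)) + B)"
    using eN by (intro mult_left_mono) auto
  finally show "sk n r N * G N \<le> (m+1) * ((r+2) * ((1/n) * (\<Sum>k=1..N. sk n r k * G k)) + B)"
    unfolding c_def .
qed



definition Kc :: "real \<Rightarrow> real" where "Kc r = 1 + 2 / r"
definition Mc :: "real \<Rightarrow> nat \<Rightarrow> real" where "Mc r m = (real m + 1) * (r + 2)"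
definition Cc :: "real \<Rightarrow> nat \<Rightarrow> real" where "Cc r m = Kc r * Mc r m + (Kc r)^2"

lemma final_arith:
  fixes r I S X A B :: real and m :: nat
  assumes r: "r > 0" and A: "A \<ge> 0" and B: "B \<ge> 0" and X: "X \<ge> 0"
    and I: "I \<le> Kc r * X + (Kc r)^2 * B" and S: "S \<le> X + Kc r * B"
  shows "X \<le> Mc r m * (A + B) \<Longrightarrow> I \<le> Cc r m * (A + B) \<and> S \<le> Cc r m * (A + B)"
    and "X = 0 \<Longrightarrow> I \<le> Cc r m * B \<and> S \<le> Cc r m * B"
proof -
  have K1: "Kc r \<ge> 1" using r unfolding Kc_def by simp
  have M0: "Mc r m \<ge> 0" using r unfolding Mc_def by simp
  have KK: "Kc r \<le> (Kc r)^2" using K1 by (simp add: power2_eq_square)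
  have MK: "Mc r m \<le> Kc r * Mc r m" using K1 M0 by (simp add: mult_right_mono[of 1 "Kc r" "Mc r m", simplified])
  {
    assume XM: "X \<le> Mc r m * (A + B)"
    have "Kc r * X \<le> Kc r * (Mc r m * (A + B))" using XM K1 by (intro mult_left_mono) auto
    moreover have "(Kc r)^2 * B \<le> (Kc r)^2 * (A + B)" using A by (intro mult_left_mono) auto
    ultimately have "I \<le> Cc r m * (A + B)" using I unfolding Cc_def by (simp add: distrib_right)
    moreover have "S \<le> Cc r m * (A + B)"
    proof -
      have "Kc r * B \<le> (Kc r)^2 * B" using KK B by (intro mult_right_mono) auto
      also have "\<dots> \<le> (Kc r)^2 * (A + B)" using A by (intro mult_left_mono) auto
      finally have "Kc r * B \<le> (Kc r)^2 * (A + B)" .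
      moreover have "X \<le> Kc r * Mc r m * (A + B)"
      proof -
        have "Mc r m * (A + B) \<le> Kc r * Mc r m * (A + B)" using MK A B by (intro mult_right_mono) auto
        thus ?thesis using XM by linarith
      qed
      ultimately show ?thesis using S unfolding Cc_def by (simp add: distrib_right)
    qed
    ultimately show "I \<le> Cc r m * (A + B) \<and> S \<le> Cc r m * (A + B)" by simp
  }
  {
    assume X0: "X = 0"
    have "(Kc r)^2 * B \<le> Cc r m * B" unfolding Cc_def using M0 K1 B by (simp add: distrib_right)
    moreover have "Kc r * B \<le> (Kc r)^2 * B" using KK B by (intro mult_right_mono) auto
    ultimately show "I \<le> Cc r m * B \<and> S \<le> Cc r m * B" using I S X0 by simp
  }
qed



lemma amgm2: "e > 0 \<Longrightarrow> 2 * \<bar>x * z\<bar> \<le> e * x^2 + z^2 / e" for e x z :: real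
proof -
  assume e: "e > 0"
  have "0 \<le> (e * \<bar>x\<bar> - \<bar>z\<bar>)^2 / e" using e by simp
  also have "(e * \<bar>x\<bar> - \<bar>z\<bar>)^2 / e = e * x^2 + z^2 / e - 2 * \<bar>x * z\<bar>"
    using e by (simp add: power2_eq_square field_simps abs_mult)
  finally show ?thesis by simp
qed

lemma amgm_sum: "e > 0 \<Longrightarrow> 2 * \<bar>\<Sum>i\<in>S. x i * z i\<bar> \<le> e * (\<Sum>i\<in>S. (x i)^2) + (\<Sum>i\<in>S. (z i)^2) / e"
  for e :: real and x z :: "nat \<Rightarrow> real"
proof -
  assume e: "e > 0"
  have "2 * \<bar>\<Sum>i\<in>S. x i * z i\<bar> \<le> (\<Sum>i\<in>S. 2 * \<bar>x i * z i\<bar>)"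
    by (simp add: sum_distrib_left[symmetric] sum_abs)
  also have "\<dots> \<le> (\<Sum>i\<in>S. e * (x i)^2 + (z i)^2 / e)" using amgm2[OF e] by (intro sum_mono) auto
  also have "\<dots> = e * (\<Sum>i\<in>S. (x i)^2) + (\<Sum>i\<in>S. (z i)^2) / e"
    by (simp add: sum.distrib sum_distrib_left sum_divide_distrib)
  finally show ?thesis .
qed

lemma disc_all:
  fixes r :: real and m n d :: nat and f :: "nat \<Rightarrow> nat \<Rightarrow> real"
  assumes r: "r > 0" and n: "n > 0"
  shows "dnorm2 n d (r - 1) m f \<le> Cc r m * (dnorm2 n d r m f + dnorm2 n d (r + 1) (m + 1) f)
      \<and> dsup2 n d r m f \<le> Cc r m * (dnorm2 n d r m f + dnorm2 n d (r + 1) (m + 1) f)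
      \<and> ((\<forall>i<d. ((nabla n ^^ m) (f i)) (n - m) = 0) \<longrightarrow>
            dnorm2 n d (r - 1) m f \<le> Cc r m * dnorm2 n d (r + 1) (m + 1) f
          \<and> dsup2 n d r m f \<le> Cc r m * dnorm2 n d (r + 1) (m + 1) f)"
proof (cases "n - m = 0")
  case True
  then have "n - (m+1) = 0" by simp
  then show ?thesis using True unfolding dnorm2_def dsup2_def by simp
next
  case False
  define N where "N = n - m"
  have N: "N \<ge> 1" and nN: "n = N + m" using False unfolding N_def by auto
  define g where "g i = (nabla n ^^ m) (f i)" for i
  define G where "G k = (\<Sum>i<d. (g i k)^2)" for k
  define D where "D k = (\<Sum>i<d. (g i (k+1) - g i k)^2)" for k
  define P where "P k = (\<Sum>i<d. g i (k+1) * (g i (k+1) - g i k))" for k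
  have Gnn: "\<And>k. G k \<ge> 0" unfolding G_def by (intro sum_nonneg) auto
  have Dnn: "\<And>k. D k \<ge> 0" unfolding D_def by (intro sum_nonneg) auto
  have st: "\<And>k. G (k+1) - G k = 2 * P k - D k"
    unfolding G_def P_def D_def by (simp add: sum_subtractf[symmetric] sum_distrib_left power2_eq_square algebra_simps)
  have am: "\<And>k e. e > 0 \<Longrightarrow> 2 * \<bar>P k\<bar> \<le> e * G (k+1) + D k / e"
    unfolding G_def P_def D_def by (rule amgm_sum)
  have Gdef: "ddiffsq n d m f k = G k" for k unfolding ddiffsq_def G_def g_def ..
  have Ddef: "ddiffsq n d (m+1) f k = (real n)^2 * D k" for k
    unfolding ddiffsq_def D_def g_def by (simp add: nabla_def sum_distrib_left power_mult_distrib)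
  define B where "B = (\<Sum>k=1..<N. real n * sk n (r+1) k * D k)"
  note core = disc_core[of r N n m G D P, OF r N nN Gnn Dnn st am]
  have Beq: "dnorm2 n d (r + 1) (m + 1) f = B"
  proof -
    have "n - (m+1) = N - 1" unfolding N_def by simp
    moreover have "{1..N-1} = {1..<N}" using N by auto
    ultimately show ?thesis unfolding dnorm2_def B_def Ddef using n
      by (simp add: sum_distrib_left power2_eq_square field_simps)
  qed
  have Ieq: "dnorm2 n d (r - 1) m f = (1/n) * (\<Sum>k=1..N. sk n (r-1) k * G k)"
    unfolding dnorm2_def Gdef N_def ..
  have Aeq: "dnorm2 n d r m f = (1/n) * (\<Sum>k=1..N. sk n r k * G k)"
    unfolding dnorm2_def Gdef N_def ..
  have skp: "sk n r k > 0" if "k \<ge> 1" for k using sk_pos[of n k r] n r that by auto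
  define X where "X = sk n r N * G N"
  have X0: "X \<ge> 0" unfolding X_def using skp[OF N] Gnn[of N] by simp
  have B0: "B \<ge> 0" unfolding B_def using Dnn n
    by (intro sum_nonneg) (auto intro!: mult_nonneg_nonneg less_imp_le[OF sk_pos] simp: r add_pos_pos add_nonneg_pos r)
  have A0: "dnorm2 n d r m f \<ge> 0" unfolding Aeq using Gnn skp
    by (intro mult_nonneg_nonneg sum_nonneg) (auto intro: less_imp_le)
  have K: "Kc r \<ge> 1" using r unfolding Kc_def by simp
  have Ib: "dnorm2 n d (r - 1) m f \<le> Kc r * X + (Kc r)^2 * B"
  proof -
    have "(2/r) * X \<le> Kc r * X" unfolding Kc_def using X0 r by (intro mult_right_mono) auto
    moreover have "(2/r) * (1 + 2/r) * B \<le> (Kc r)^2 * B" unfolding Kc_def power2_eq_square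
      using B0 r by (intro mult_right_mono mult_mono) auto
    ultimately show ?thesis using core(1) unfolding Ieq X_def B_def by linarith
  qed
  have Sb: "dsup2 n d r m f \<le> X + Kc r * B"
  proof -
    have "(1 + 1/r) * B \<le> Kc r * B" unfolding Kc_def using B0 r by (intro mult_right_mono) (simp_all add: divide_right_mono)
    hence "\<forall>j\<in>{1..N}. sk n r j * G j \<le> X + Kc r * B" using core(2) unfolding X_def B_def by fastforce
    moreover have "0 \<le> X + Kc r * B" using X0 B0 K by simp
    ultimately show ?thesis unfolding dsup2_def Gdef N_def[symmetric] by (simp add: Max_le_iff)
  qed
  have Xb: "X \<le> Mc r m * (dnorm2 n d r m f + B)"
  proof -
    have "X \<le> (m+1) * ((r+2) * dnorm2 n d r m f + B)" using core(3) unfolding X_def B_def Aeq .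
    also have "\<dots> \<le> Mc r m * (dnorm2 n d r m f + B)" unfolding Mc_def using r A0 B0
      by (simp add: algebra_simps)
    finally show ?thesis .
  qed
  have XG: "(\<forall>i<d. ((nabla n ^^ m) (f i)) (n - m) = 0) \<longrightarrow> X = 0"
    unfolding X_def G_def g_def N_def by simp
  show ?thesis using final_arith[OF r A0 B0 X0 Ib Sb] Xb XG Beq by auto
qed



lemma lint_eq:
  fixes h :: "real \<Rightarrow> real" and p :: real
  assumes cont: "continuous_on {0..1} h"
    and int: "(\<lambda>s. s powr p * h s) integrable_on {0..1}"
    and nn: "\<And>s. s \<in> {0..1} \<Longrightarrow> h s \<ge> 0"
  shows "(LINT s:{0..1}|lborel. s powr p * h s) = integral {0..1} (\<lambda>s. s powr p * h s)"
proof -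
  let ?f = "\<lambda>s. s powr p * h s"
  have "?f absolutely_integrable_on {0..1}"
    using int nn by (intro nonnegative_absolutely_integrable_1) auto
  hence li: "integrable lebesgue (\<lambda>x. indicator {0..1} x *\<^sub>R ?f x)"
    unfolding set_integrable_def .
  have eq: "(\<lambda>x. indicator {0..1} x *\<^sub>R ?f x) = (\<lambda>x. indicator {0<..1} x *\<^sub>R ?f x)"
    by (rule ext) (auto simp: indicator_def)
  have co: "continuous_on {0<..1} ?f"
    using cont by (auto intro!: continuous_intros intro: continuous_on_subset)
  have meas: "(\<lambda>x. indicator {0..1} x *\<^sub>R ?f x) \<in> borel_measurable lborel"
    unfolding eq measurable_lborel2 using borel_measurable_continuous_on_indicator[OF _ co] by simp
  have "integrable lborel (\<lambda>x. indicator {0..1} x *\<^sub>R ?f x)"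
    using li integrable_completion[OF meas] by simp
  hence "set_integrable lborel {0..1} ?f" unfolding set_integrable_def .
  thus ?thesis by (rule set_borel_integral_eq_integral)
qed

lemma powr_cont01: "p > 0 \<Longrightarrow> continuous_on {0..1::real} (\<lambda>s. s powr p)"
  by (intro continuous_on_powr') (auto intro: continuous_intros)

lemma ftc_p:
  fixes h Dh :: "real \<Rightarrow> real" and p a :: real
  assumes p: "p > 0" and a: "0 \<le> a" "a \<le> 1"
    and cont: "continuous_on {0..1} h"
    and der: "\<And>x. x \<in> {0..1} \<Longrightarrow> (h has_real_derivative Dh x) (at x within {0..1})"
  shows "((\<lambda>s. p * s powr (p-1) * h s + s powr p * Dh s) has_integral (h 1 - a powr p * h a)) {a..1}"
proof -
  have c: "continuous_on {a..1} (\<lambda>s. s powr p * h s)"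
    using powr_cont01[OF p] cont a by (intro continuous_on_mult) (auto intro: continuous_on_subset)
  have d: "((\<lambda>s. s powr p * h s) has_vector_derivative (p * x powr (p-1) * h x + x powr p * Dh x)) (at x)"
    if x: "x \<in> {a<..<1}" for x
  proof -
    have x0: "0 < x" "x < 1" using x a by auto
    have "(h has_real_derivative Dh x) (at x)"
      using der[of x] x0 at_within_Icc_at[of 0 x 1] by auto
    hence "((\<lambda>s. s powr p * h s) has_real_derivative (p * x powr (p-1) * h x + x powr p * Dh x)) (at x)"
      using x0 by (auto intro!: derivative_eq_intros simp: algebra_simps)
    thus ?thesis by (simp add: has_real_derivative_iff_has_vector_derivative)
  qed
  from fundamental_theorem_of_calculus_interior[OF a(2) c d]
  show ?thesis by simp
qed



lemma icm: "f integrable_on S \<Longrightarrow> (\<lambda>x. (c::real) * f x) integrable_on S"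
  for f :: "real \<Rightarrow> real"
  using integrable_on_cmult_left[of f S c] by simp

lemma pw_bound:
  fixes s r c hs h1s Ds :: real
  assumes s: "0 \<le> s" and r: "r > 0" and c: "c > 0" and hs: "hs \<ge> 0" and h1s: "h1s \<ge> 0"
    and am: "\<And>t. t > 0 \<Longrightarrow> \<bar>Ds\<bar> \<le> t * hs + h1s / t"
  shows "s powr r * \<bar>Ds\<bar> \<le> c * (s powr (r-1) * hs) + (1/c) * (s powr (r+1) * h1s)"
proof (cases "s = 0")
  case True then show ?thesis by simp
next
  case False
  hence s0: "s > 0" using s by simp
  have "s powr r * \<bar>Ds\<bar> \<le> s powr r * ((c/s) * hs + h1s / (c/s))"
    using am[of "c/s"] s0 c by (intro mult_left_mono) auto
  also have "\<dots> = c * (s powr r / s * hs) + (1/c) * (s powr r * s * h1s)"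
    using s0 c by (simp add: field_simps)
  also have "s powr r / s = s powr (r-1)" using s0 by (simp add: powr_diff)
  also have "s powr r * s = s powr (r+1)" using s0 by (simp add: powr_add)
  finally show ?thesis .
qed

lemma cont_core:
  fixes h h1 Dh :: "real \<Rightarrow> real" and r :: real
  assumes r: "r > 0"
    and hnn: "\<And>s. s \<in> {0..1} \<Longrightarrow> h s \<ge> 0" and h1nn: "\<And>s. s \<in> {0..1} \<Longrightarrow> h1 s \<ge> 0"
    and ch: "continuous_on {0..1} h" and ch1: "continuous_on {0..1} h1" and cD: "continuous_on {0..1} Dh"
    and der: "\<And>x. x \<in> {0..1} \<Longrightarrow> (h has_real_derivative Dh x) (at x within {0..1})"
    and am: "\<And>x t. x \<in> {0..1} \<Longrightarrow> t > 0 \<Longrightarrow> \<bar>Dh x\<bar> \<le> t * h x + h1 x / t"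
  shows "(LINT s:{0..1}|lborel. s powr (r-1) * h s) \<le> (2/r) * h 1 + (2/r)^2 * (LINT s:{0..1}|lborel. s powr (r+1) * h1 s)"
    and "(SUP s\<in>{0..1}. s powr r * h s) \<le> h 1 + (1/r) * (LINT s:{0..1}|lborel. s powr (r+1) * h1 s)"
    and "h 1 \<le> (r+2) * (LINT s:{0..1}|lborel. s powr r * h s) + (LINT s:{0..1}|lborel. s powr (r+1) * h1 s)"
    and "0 \<le> (LINT s:{0..1}|lborel. s powr r * h s)"
    and "0 \<le> (LINT s:{0..1}|lborel. s powr (r+1) * h1 s)"
proof -
  let ?fA = "\<lambda>s. s powr r * h s"
  let ?fB = "\<lambda>s. s powr (r+1) * h1 s"
  let ?fI = "\<lambda>s. s powr (r-1) * h s"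
  let ?F = "\<lambda>p s. p * s powr (p-1) * h s + s powr p * Dh s"
  have r1: "r + 1 > 0" using r by simp
  have cA: "continuous_on {0..1} ?fA" using powr_cont01[OF r] ch by (intro continuous_on_mult)
  have cB: "continuous_on {0..1} ?fB" using powr_cont01[OF r1] ch1 by (intro continuous_on_mult)
  have iA: "?fA integrable_on {0..1}" using cA by (rule integrable_continuous_interval)
  have iB: "\<And>a. 0 \<le> a \<Longrightarrow> ?fB integrable_on {a..1}"
    by (rule integrable_on_subinterval[OF integrable_continuous_interval[OF cB]]) auto
  have iB0: "?fB integrable_on {0..1}" using cB by (rule integrable_continuous_interval)
  have cDr: "continuous_on {0..1} (\<lambda>s. s powr r * Dh s)" using powr_cont01[OF r] cD by (intro continuous_on_mult)
  have iDr: "(\<lambda>s. s powr r * Dh s) integrable_on {0..1}" using cDr by (rule integrable_continuous_interval)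
  have Fr: "(?F r has_integral h 1) {0..1}"
    using ftc_p[of r 0, OF r _ _ ch der] r by simp
  have iI: "?fI integrable_on {0..1}"
  proof -
    have "(\<lambda>s. (1/r) * (?F r s - s powr r * Dh s)) integrable_on {0..1}"
      using Fr iDr by (intro icm integrable_diff) (auto simp: has_integral_integrable)
    moreover have "(\<lambda>s. (1/r) * (?F r s - s powr r * Dh s)) = ?fI" using r by (auto simp: field_simps)
    ultimately show ?thesis by simp
  qed
  have LA: "(LINT s:{0..1}|lborel. s powr r * h s) = integral {0..1} ?fA" by (rule lint_eq[OF ch iA hnn])
  have LB: "(LINT s:{0..1}|lborel. s powr (r+1) * h1 s) = integral {0..1} ?fB" by (rule lint_eq[OF ch1 iB0 h1nn])
  have LI: "(LINT s:{0..1}|lborel. s powr (r-1) * h s) = integral {0..1} ?fI" by (rule lint_eq[OF ch iI hnn])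
  have Bnn: "integral {0..1} ?fB \<ge> 0" using h1nn by (intro integral_nonneg iB0) auto
  then show "0 \<le> (LINT s:{0..1}|lborel. s powr (r+1) * h1 s)" unfolding LB .
  have "integral {0..1} ?fA \<ge> 0" using hnn by (intro integral_nonneg iA) auto
  then show "0 \<le> (LINT s:{0..1}|lborel. s powr r * h s)" unfolding LA .
  have Fr1: "(?F (r+1) has_integral h 1) {0..1}"
    using ftc_p[of "r+1" 0, OF r1 _ _ ch der] r1 by simp
  have "h 1 = integral {0..1} (?F (r+1))" using Fr1 r by (simp add: integral_unique)
  also have "\<dots> \<le> integral {0..1} (\<lambda>s. (r+2) * ?fA s + ?fB s)"
  proof (rule integral_le)
    show "?F (r+1) integrable_on {0..1}" using Fr1 by (auto simp: has_integral_integrable)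
    show "(\<lambda>s. (r+2) * ?fA s + ?fB s) integrable_on {0..1}" using iA iB0 by (intro integrable_add icm)
    fix s :: real assume s: "s \<in> {0..1}"
    have a1: "\<bar>Dh s\<bar> \<le> h s + h1 s" using am[OF s, of 1] by simp
    have "s powr (r+1) * Dh s \<le> s powr (r+1) * (h s + h1 s)"
      using a1 by (intro mult_left_mono) auto
    moreover have "s powr (r+1) * h s \<le> s powr r * h s"
    proof -
      have "s powr (r+1) = s powr r * s" using s by (cases "s = 0") (auto simp: powr_add)
      also have "\<dots> \<le> s powr r" using s by (intro mult_left_le) auto
      finally show ?thesis using hnn[OF s] by (intro mult_right_mono) auto
    qed
    ultimately show "?F (r+1) s \<le> (r+2) * ?fA s + ?fB s" by (simp add: algebra_simps)
  qed
  also have "\<dots> = (r+2) * integral {0..1} ?fA + integral {0..1} ?fB"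
    by (simp only: integral_add[OF icm[OF iA] iB0] integral_mult_right)
  finally show "h 1 \<le> (r+2) * (LINT s:{0..1}|lborel. s powr r * h s) + (LINT s:{0..1}|lborel. s powr (r+1) * h1 s)"
    unfolding LA LB .
  have pt: "a powr r * h a \<le> h 1 + (1/r) * integral {0..1} ?fB" if a: "a \<in> {0..1}" for a
  proof -
    have a0: "0 \<le> a" using a by auto
    have Fa: "(?F r has_integral (h 1 - a powr r * h a)) {a..1}"
      using ftc_p[of r a, OF r _ _ ch der] a by auto
    have "- ((1/r) * integral {a..1} ?fB) \<le> integral {a..1} (?F r)"
    proof -
      have "integral {a..1} (\<lambda>s. - ((1/r) * ?fB s)) \<le> integral {a..1} (?F r)"
      proof (rule integral_le)
        show "(\<lambda>s. - ((1/r) * ?fB s)) integrable_on {a..1}" using iB[OF a0]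
          by (intro integrable_neg icm)
        show "?F r integrable_on {a..1}" using Fa by (auto simp: has_integral_integrable)
        fix s assume s: "s \<in> {a..1}"
        hence s01: "s \<in> {0..1}" using a by auto
        have "s powr r * \<bar>Dh s\<bar> \<le> r * (s powr (r-1) * h s) + (1/r) * (s powr (r+1) * h1 s)"
          using pw_bound[of s r r "h s" "h1 s" "Dh s"] s01 r hnn h1nn am by auto
        moreover have "- (s powr r * \<bar>Dh s\<bar>) \<le> s powr r * Dh s"
          using mult_left_mono[of "-\<bar>Dh s\<bar>" "Dh s" "s powr r"] by simp
        ultimately show "- ((1/r) * ?fB s) \<le> ?F r s" by (simp add: algebra_simps)
      qed
      thus ?thesis by (simp only: integral_neg integral_mult_right)
    qed
    moreover have "integral {a..1} ?fB \<le> integral {0..1} ?fB"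
      using a iB[OF a0] iB0 h1nn by (intro integral_subset_le) auto
    moreover have "integral {a..1} (?F r) = h 1 - a powr r * h a" using Fa by (rule integral_unique)
    moreover have "(1/r) * integral {a..1} ?fB \<le> (1/r) * integral {0..1} ?fB"
      using calculation(2) r by (intro mult_left_mono) auto
    ultimately show ?thesis by linarith
  qed
  show "(SUP s\<in>{0..1}. s powr r * h s) \<le> h 1 + (1/r) * (LINT s:{0..1}|lborel. s powr (r+1) * h1 s)"
    unfolding LB using pt by (intro cSUP_least) auto
  have "(r/2) * integral {0..1} ?fI - (2/r) * integral {0..1} ?fB \<le> integral {0..1} (?F r)"
  proof -
    have "integral {0..1} (\<lambda>s. (r/2) * ?fI s - (2/r) * ?fB s) \<le> integral {0..1} (?F r)"
    proof (rule integral_le)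
      show "(\<lambda>s. (r/2) * ?fI s - (2/r) * ?fB s) integrable_on {0..1}" using iI iB0
        by (intro integrable_diff icm)
      show "?F r integrable_on {0..1}" using Fr by (auto simp: has_integral_integrable)
      fix s :: real assume s01: "s \<in> {0..1}"
      have "s powr r * \<bar>Dh s\<bar> \<le> (r/2) * (s powr (r-1) * h s) + (1/(r/2)) * (s powr (r+1) * h1 s)"
        using pw_bound[of s r "r/2" "h s" "h1 s" "Dh s"] s01 r hnn h1nn am by auto
      moreover have "- (s powr r * \<bar>Dh s\<bar>) \<le> s powr r * Dh s"
        using mult_left_mono[of "-\<bar>Dh s\<bar>" "Dh s" "s powr r"] by simp
      ultimately have "r * ?fI s - (r/2) * ?fI s - (1/(r/2)) * ?fB s \<le> r * ?fI s + s powr r * Dh s"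
        by linarith
      moreover have "r * ?fI s - (r/2) * ?fI s = (r/2) * ?fI s" by simp
      ultimately show "(r/2) * ?fI s - (2/r) * ?fB s \<le> ?F r s" by (simp add: ac_simps)
    qed
    moreover have "integral {0..1} (\<lambda>s. (r/2) * ?fI s - (2/r) * ?fB s) = (r/2) * integral {0..1} ?fI - (2/r) * integral {0..1} ?fB"
      by (simp only: integral_diff[OF icm[OF iI] icm[OF iB0]] integral_mult_right)
    ultimately show ?thesis by simp
  qed
  moreover have "integral {0..1} (?F r) = h 1" using Fr r by (simp add: integral_unique)
  ultimately have "integral {0..1} ?fI \<le> (2/r) * ((2/r) * integral {0..1} ?fB + h 1)"
    using r by (simp add: field_simps)
  thus "(LINT s:{0..1}|lborel. s powr (r-1) * h s) \<le> (2/r) * h 1 + (2/r)^2 * (LINT s:{0..1}|lborel. s powr (r+1) * h1 s)"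
    unfolding LI LB by (simp add: power2_eq_square algebra_simps)
qed



lemma cont_all:
  fixes r :: real and m d :: nat and f :: "nat \<Rightarrow> real \<Rightarrow> real"
  assumes r: "r > 0" and sm: "\<forall>i<d. smooth01 (f i)"
  shows "cnorm2 d (r - 1) m f \<le> Cc r m * (cnorm2 d r m f + cnorm2 d (r + 1) (m + 1) f)
      \<and> csup2 d r m f \<le> Cc r m * (cnorm2 d r m f + cnorm2 d (r + 1) (m + 1) f)
      \<and> ((\<forall>i<d. vderiv m (f i) 1 = 0) \<longrightarrow>
            cnorm2 d (r - 1) m f \<le> Cc r m * cnorm2 d (r + 1) (m + 1) f
          \<and> csup2 d r m f \<le> Cc r m * cnorm2 d (r + 1) (m + 1) f)"
proof -
  define g where "g i = vderiv m (f i)" for i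
  define g' where "g' i = vderiv (Suc m) (f i)" for i
  have dif: "vderiv k (f i) differentiable (at x within {0..1})" if "i < d" "x \<in> {0..1}" for i k x
    using sm that unfolding smooth01_def by blast
  have dg: "(g i has_real_derivative g' i x) (at x within {0..1})" if "i < d" "x \<in> {0..1}" for i x
  proof -
    have "(g i has_vector_derivative vector_derivative (g i) (at x within {0..1})) (at x within {0..1})"
      using dif[OF that, of m] unfolding g_def by (simp add: vector_derivative_works[symmetric])
    thus ?thesis unfolding g'_def g_def by (simp add: has_real_derivative_iff_has_vector_derivative)
  qed
  have cv: "continuous_on {0..1} (vderiv k (f i))" if "i < d" for i k
    using dif[OF that] by (auto simp: continuous_on_eq_continuous_within intro: differentiable_imp_continuous_within)
  have cg: "continuous_on {0..1} (g i)" if "i < d" for i unfolding g_def by (rule cv[OF that])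
  have cg': "continuous_on {0..1} (g' i)" if "i < d" for i unfolding g'_def by (rule cv[OF that])
  define h where "h = dnormsq d m f"
  define h1 where "h1 = dnormsq d (m+1) f"
  define Dh where "Dh s = (\<Sum>i<d. 2 * g i s * g' i s)" for s
  have hh: "h s = (\<Sum>i<d. (g i s)^2)" for s unfolding h_def dnormsq_def g_def ..
  have hh1: "h1 s = (\<Sum>i<d. (g' i s)^2)" for s unfolding h1_def dnormsq_def g'_def by simp
  have hnn: "h s \<ge> 0" for s unfolding hh by (intro sum_nonneg) auto
  have h1nn: "h1 s \<ge> 0" for s unfolding hh1 by (intro sum_nonneg) auto
  have ch: "continuous_on {0..1} h" unfolding hh[abs_def]
    using cg by (intro continuous_intros) auto
  have ch1: "continuous_on {0..1} h1" unfolding hh1[abs_def]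
    using cg' by (intro continuous_intros) auto
  have cD: "continuous_on {0..1} Dh" unfolding Dh_def[abs_def]
    using cg cg' by (intro continuous_intros) auto
  have der: "(h has_real_derivative Dh x) (at x within {0..1})" if x: "x \<in> {0..1}" for x
  proof -
    have "((\<lambda>s. \<Sum>i<d. (g i s)^2) has_real_derivative (\<Sum>i<d. 2 * g i x * g' i x)) (at x within {0..1})"
      using dg x by (auto intro!: derivative_eq_intros simp: ac_simps)
    thus ?thesis unfolding hh[abs_def] Dh_def .
  qed
  have am: "\<bar>Dh x\<bar> \<le> t * h x + h1 x / t" if "t > 0" for x t
  proof -
    have "Dh x = 2 * (\<Sum>i<d. g i x * g' i x)" unfolding Dh_def by (simp add: sum_distrib_left mult.assoc)
    hence "\<bar>Dh x\<bar> = 2 * \<bar>\<Sum>i<d. g i x * g' i x\<bar>" by simp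
    thus ?thesis unfolding hh hh1 using amgm_sum[OF that, where x="\<lambda>i. g i x" and z="\<lambda>i. g' i x" and S="{..<d}"] by simp
  qed
  have hnn': "\<And>s. s \<in> {0..1} \<Longrightarrow> h s \<ge> 0" using hnn by blast
  have h1nn': "\<And>s. s \<in> {0..1} \<Longrightarrow> h1 s \<ge> 0" using h1nn by blast
  have am': "\<And>x t. x \<in> {0..1} \<Longrightarrow> t > 0 \<Longrightarrow> \<bar>Dh x\<bar> \<le> t * h x + h1 x / t" using am by blast
  note cc = cont_core[OF r hnn' h1nn' ch ch1 cD der am']
  have A: "cnorm2 d r m f = (LINT s:{0..1}|lborel. s powr r * h s)" unfolding cnorm2_def h_def ..
  have B: "cnorm2 d (r + 1) (m + 1) f = (LINT s:{0..1}|lborel. s powr (r+1) * h1 s)" unfolding cnorm2_def h1_def ..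
  have I: "cnorm2 d (r - 1) m f = (LINT s:{0..1}|lborel. s powr (r-1) * h s)" unfolding cnorm2_def h_def ..
  have S: "csup2 d r m f = (SUP s\<in>{0..1}. s powr r * h s)" unfolding csup2_def h_def ..
  have K1: "Kc r \<ge> 2 / r" unfolding Kc_def using r by simp
  have "1 / r \<le> 2 / r" using r by (simp add: divide_right_mono)
  hence K: "Kc r \<ge> 2 / r" "Kc r \<ge> 1 / r" using K1 by auto
  have Ib: "cnorm2 d (r - 1) m f \<le> Kc r * h 1 + (Kc r)^2 * cnorm2 d (r + 1) (m + 1) f"
  proof -
    have "(2/r) * h 1 \<le> Kc r * h 1" using K hnn[of 1] by (intro mult_right_mono) auto
    moreover have "(2/r)^2 * cnorm2 d (r + 1) (m + 1) f \<le> (Kc r)^2 * cnorm2 d (r + 1) (m + 1) f"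
      using K cc(5) r unfolding B by (intro mult_right_mono power_mono) auto
    ultimately show ?thesis using cc(1) unfolding I B by linarith
  qed
  have Sb: "csup2 d r m f \<le> h 1 + Kc r * cnorm2 d (r + 1) (m + 1) f"
  proof -
    have "(1/r) * cnorm2 d (r + 1) (m + 1) f \<le> Kc r * cnorm2 d (r + 1) (m + 1) f"
      using K cc(5) unfolding B by (intro mult_right_mono) auto
    thus ?thesis using cc(2) unfolding S B by linarith
  qed
  have Xb: "h 1 \<le> Mc r m * (cnorm2 d r m f + cnorm2 d (r + 1) (m + 1) f)"
  proof -
    have "(r+2) * cnorm2 d r m f \<le> Mc r m * cnorm2 d r m f"
      unfolding Mc_def using cc(4) r unfolding A by (intro mult_right_mono) auto
    moreover have "cnorm2 d (r + 1) (m + 1) f \<le> Mc r m * cnorm2 d (r + 1) (m + 1) f"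
    proof -
      have "1 * 1 \<le> (real m + 1) * (r + 2)" using r by (intro mult_mono) auto
      hence "1 \<le> Mc r m" unfolding Mc_def by simp
      from mult_right_mono[OF this cc(5)] show ?thesis unfolding B by simp
    qed
    ultimately show ?thesis using cc(3) unfolding A B by (simp add: distrib_left)
  qed
  have X0: "(\<forall>i<d. vderiv m (f i) 1 = 0) \<longrightarrow> h 1 = 0" unfolding hh g_def by simp
  show ?thesis using final_arith[OF r cc(4)[folded A] cc(5)[folded B] hnn[of 1] Ib Sb] Xb X0 by auto
qed


theorem theorem4p2:
  fixes r :: real and m :: nat
  assumes "r > 0"
  shows "\<exists>C::real.
    (\<forall>(d::nat) (f::nat \<Rightarrow> real \<Rightarrow> real). (\<forall>i<d. smooth01 (f i)) \<longrightarrow>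
        cnorm2 d (r - 1) m f \<le> C * (cnorm2 d r m f + cnorm2 d (r + 1) (m + 1) f)
      \<and> csup2 d r m f \<le> C * (cnorm2 d r m f + cnorm2 d (r + 1) (m + 1) f)
      \<and> ((\<forall>i<d. vderiv m (f i) 1 = 0) \<longrightarrow>
            cnorm2 d (r - 1) m f \<le> C * cnorm2 d (r + 1) (m + 1) f
          \<and> csup2 d r m f \<le> C * cnorm2 d (r + 1) (m + 1) f))
  \<and> (\<forall>(n::nat) (d::nat) (f::nat \<Rightarrow> nat \<Rightarrow> real). 0 < n \<longrightarrow>
        dnorm2 n d (r - 1) m f \<le> C * (dnorm2 n d r m f + dnorm2 n d (r + 1) (m + 1) f)
      \<and> dsup2 n d r m f \<le> C * (dnorm2 n d r m f + dnorm2 n d (r + 1) (m + 1) f)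
      \<and> ((\<forall>i<d. ((nabla n ^^ m) (f i)) (n - m) = 0) \<longrightarrow>
            dnorm2 n d (r - 1) m f \<le> C * dnorm2 n d (r + 1) (m + 1) f
          \<and> dsup2 n d r m f \<le> C * dnorm2 n d (r + 1) (m + 1) f))"
  proof (rule exI[of _ "Cc r m"], intro conjI allI impI)
  fix d :: nat and f :: "nat \<Rightarrow> real \<Rightarrow> real"
  assume "\<forall>i<d. smooth01 (f i)"
  note c = cont_all[OF assms this]
  show "cnorm2 d (r - 1) m f \<le> Cc r m * (cnorm2 d r m f + cnorm2 d (r + 1) (m + 1) f)" using c by blast
  show "csup2 d r m f \<le> Cc r m * (cnorm2 d r m f + cnorm2 d (r + 1) (m + 1) f)" using c by blast
  assume "\<forall>i<d. vderiv m (f i) 1 = 0"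
  then show "cnorm2 d (r - 1) m f \<le> Cc r m * cnorm2 d (r + 1) (m + 1) f"
    and "csup2 d r m f \<le> Cc r m * cnorm2 d (r + 1) (m + 1) f" using c by blast+
next
  fix n d :: nat and f :: "nat \<Rightarrow> nat \<Rightarrow> real"
  assume "0 < n"
  note c = disc_all[OF assms this, of d m f]
  show "dnorm2 n d (r - 1) m f \<le> Cc r m * (dnorm2 n d r m f + dnorm2 n d (r + 1) (m + 1) f)" using c by blast
  show "dsup2 n d r m f \<le> Cc r m * (dnorm2 n d r m f + dnorm2 n d (r + 1) (m + 1) f)" using c by blast
  assume "\<forall>i<d. ((nabla n ^^ m) (f i)) (n - m) = 0"
  then show "dnorm2 n d (r - 1) m f \<le> Cc r m * dnorm2 n d (r + 1) (m + 1) f"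
    and "dsup2 n d r m f \<le> Cc r m * dnorm2 n d (r + 1) (m + 1) f" using c by blast+
qed

end
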